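(* Let $i\in\{3\frac{1}{2},4,5\}$ and let $X$ be a locally connected $T_i$-space. Let $\mathscr{Y}_i(X)$ be the set of (equivalence classes of) $T_i$ one-point connectifications of $X$, where for $Y_1,Y_2\in\mathscr{Y}_i(X)$ we put $Y_1\leq Y_2$ if there is a continuous map $f:Y_2\to Y_1$ fixing every point of $X$. Let $$\mathscr{Z}(X)=\{Z\subseteq\beta X\setminus X:\ Z\text{ is compact and } Z\cap\mathrm{cl}_{\beta X}C\neq\emptyset\text{ for every component }C\text{ of }X\},$$ partially ordered by inclusion. For $Z\in\mathscr{Z}(X)$ let $Q$ be the quotient space of $\beta X$ obtained by contracting $Z$ to a single point $z$, and let $\zeta_X(Z)=X\cup\{z\}$, regarded as a subspace of $Q$. Then $\zeta_X(Z)\in\mathscr{Y}_i(X)$ for every $Z\in\mathscr{Z}(X)$, and the map $\zeta_X:(\mathscr{Z}(X),\subseteq)\to(\mathscr{Y}_i(X),\leq)$ is an anti-order-isomorphism.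
   Context: Conventions: $T_{3\frac12}$ = completely regular and $T_1$; $T_4$ = normal and $T_1$; $T_5$ = hereditarily normal (every subspace normal) and $T_1$. $\beta X$ denotes the Stone–Čech compactification of $X$. A one-point connectification of $X$ is a connected space $Y$ containing $X$ as a dense subspace with $Y\setminus X$ a singleton; two one-point connectifications are equivalent if there is a homeomorphism between them fixing every point of $X$, and equivalent ones are identified. A map $f:P\to Q$ between partially ordered sets is an anti-order-homomorphism if $a\le b$ implies $f(b)\le f(a)$; it is an anti-order-isomorphism if it is bijective and both $f$ and $f^{-1}$ are anti-order-homomorphisms. *)

theory Defs
  imports "HOL-Analysis.Analysis"
begin

datatype sep_axiom = T3half | T4 | T5

fun Ti_space :: "sep_axiom \<Rightarrow> 'a topology \<Rightarrow> bool" where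
  "Ti_space T3half Y \<longleftrightarrow> completely_regular_space Y \<and> t1_space Y"
| "Ti_space T4 Y \<longleftrightarrow> normal_space Y \<and> t1_space Y"
| "Ti_space T5 Y \<longleftrightarrow> hereditarily normal_space Y \<and> t1_space Y"

definition stone_cech :: "'a topology \<Rightarrow> 'a topology \<Rightarrow> bool" where
  "stone_cech X B \<longleftrightarrow>
     compact_space B \<and> Hausdorff_space B \<and>
     topspace X \<subseteq> topspace B \<and> subtopology B (topspace X) = X \<and>
     B closure_of (topspace X) = topspace B \<and>
     (\<forall>f. continuous_map X (top_of_set {0..1::real}) f \<longrightarrow>
        (\<exists>g. continuous_map B (top_of_set {0..1::real}) g \<and> (\<forall>x\<in>topspace X. g x = f x)))"

definition quotient_top :: "'a topology \<Rightarrow> ('a \<Rightarrow> 'b) \<Rightarrow> 'b topology" where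
  "quotient_top T f = topology (\<lambda>U. U \<subseteq> f ` topspace T \<and> openin T {x \<in> topspace T. f x \<in> U})"

text \<open>One-point connectifications of X are represented on the type 'a option:
  a point x of X is represented by Some x and the extra point by None.  Two
  one-point connectifications represented this way are equivalent iff they are
  equal, so this set represents exactly the equivalence classes.\<close>
definition one_point_connectifications :: "sep_axiom \<Rightarrow> 'a topology \<Rightarrow> 'a option topology set" where
  "one_point_connectifications i X =
     {Y. topspace Y = insert None (Some ` topspace X) \<and>
         homeomorphic_map X (subtopology Y (Some ` topspace X)) Some \<and>
         Y closure_of (Some ` topspace X) = topspace Y \<and>
         connected_space Y \<and> Ti_space i Y}"

definition opc_le :: "'a topology \<Rightarrow> 'a option topology \<Rightarrow> 'a option topology \<Rightarrow> bool" where
  "opc_le X Y1 Y2 \<longleftrightarrow> (\<exists>f. continuous_map Y2 Y1 f \<and> (\<forall>x\<in>topspace X. f (Some x) = Some x))"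

definition Zsets :: "'a topology \<Rightarrow> 'a topology \<Rightarrow> 'a set set" where
  "Zsets X B = {Z. Z \<subseteq> topspace B - topspace X \<and> compactin B Z \<and>
                   (\<forall>C\<in>connected_components_of X. Z \<inter> B closure_of C \<noteq> {})}"

definition zeta :: "'a topology \<Rightarrow> 'a topology \<Rightarrow> 'a set \<Rightarrow> 'a option topology" where
  "zeta X B Z = subtopology (quotient_top B (\<lambda>p. if p \<in> Z then None else Some p))
                            (insert None (Some ` topspace X))"

end

theory Submission
  imports Defs
begin

lemma openin_quotient_top:
  "openin (quotient_top T f) U \<longleftrightarrow> U \<subseteq> f ` topspace T \<and> openin T {x \<in> topspace T. f x \<in> U}"
proof -
  have "istopology (\<lambda>U. U \<subseteq> f ` topspace T \<and> openin T {x \<in> topspace T. f x \<in> U})"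
    unfolding istopology_def
  proof (intro conjI)
    show "\<forall>S U. S \<subseteq> f ` topspace T \<and> openin T {x \<in> topspace T. f x \<in> S} \<longrightarrow>
       U \<subseteq> f ` topspace T \<and> openin T {x \<in> topspace T. f x \<in> U} \<longrightarrow>
       S \<inter> U \<subseteq> f ` topspace T \<and> openin T {x \<in> topspace T. f x \<in> S \<inter> U}"
    proof (intro allI impI)
      fix S U assume "S \<subseteq> f ` topspace T \<and> openin T {x \<in> topspace T. f x \<in> S}"
        "U \<subseteq> f ` topspace T \<and> openin T {x \<in> topspace T. f x \<in> U}"
      moreover have "{x \<in> topspace T. f x \<in> S \<inter> U} = {x \<in> topspace T. f x \<in> S} \<inter> {x \<in> topspace T. f x \<in> U}" by auto
      ultimately show "S \<inter> U \<subseteq> f ` topspace T \<and> openin T {x \<in> topspace T. f x \<in> S \<inter> U}"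
        by auto
    qed
  next
    show "\<forall>K. (\<forall>U\<in>K. U \<subseteq> f ` topspace T \<and> openin T {x \<in> topspace T. f x \<in> U}) \<longrightarrow>
       \<Union>K \<subseteq> f ` topspace T \<and> openin T {x \<in> topspace T. f x \<in> \<Union>K}"
    proof (intro allI impI)
      fix K assume K: "\<forall>U\<in>K. U \<subseteq> f ` topspace T \<and> openin T {x \<in> topspace T. f x \<in> U}"
      have "{x \<in> topspace T. f x \<in> \<Union>K} = \<Union>((\<lambda>U. {x \<in> topspace T. f x \<in> U}) ` K)" by auto
      moreover have "openin T (\<Union>((\<lambda>U. {x \<in> topspace T. f x \<in> U}) ` K))"
        using K by (intro openin_Union) auto
      ultimately show "\<Union>K \<subseteq> f ` topspace T \<and> openin T {x \<in> topspace T. f x \<in> \<Union>K}"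
        using K by auto
    qed
  qed
  then show ?thesis unfolding quotient_top_def by (simp add: topology_inverse')
qed

lemma topspace_quotient_top: "topspace (quotient_top T f) = f ` topspace T"
proof -
  have "{x \<in> topspace T. f x \<in> f ` topspace T} = topspace T" by auto
  then have "openin (quotient_top T f) (f ` topspace T)"
    by (simp add: openin_quotient_top)
  moreover have "\<And>U. openin (quotient_top T f) U \<Longrightarrow> U \<subseteq> f ` topspace T"
    by (simp add: openin_quotient_top)
  ultimately show ?thesis
    by (metis openin_subset openin_topspace subset_antisym)
qed

lemma topspace_zeta:
  assumes "Z \<subseteq> topspace B - topspace X" "Z \<noteq> {}" "topspace X \<subseteq> topspace B"
  shows "topspace (zeta X B Z) = insert None (Some ` topspace X)"
  using assms unfolding zeta_def
  by (auto simp: topspace_quotient_top image_iff)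

lemma openin_zeta:
  assumes Z: "Z \<subseteq> topspace B - topspace X" "Z \<noteq> {}" "topspace X \<subseteq> topspace B"
  shows "openin (zeta X B Z) N \<longleftrightarrow> N \<subseteq> insert None (Some ` topspace X) \<and>
     (\<exists>V. openin B V \<and> (None \<in> N \<longrightarrow> Z \<subseteq> V) \<and> (None \<notin> N \<longrightarrow> V \<inter> Z = {})
          \<and> {x \<in> topspace X. Some x \<in> N} = V \<inter> topspace X)"
    (is "?L \<longleftrightarrow> ?R")
proof -
  define q where "q = (\<lambda>p. if p \<in> Z then None else Some p)"
  define T where "T = insert None (Some ` topspace X)"
  have zdef: "zeta X B Z = subtopology (quotient_top B q) T"
    unfolding zeta_def q_def T_def ..
  show ?thesis
  proof
    assume ?L
    then obtain M where M: "openin (quotient_top B q) M" "N = M \<inter> T"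
      unfolding zdef openin_subtopology by auto
    define V where "V = {x \<in> topspace B. q x \<in> M}"
    have "openin B V" using M(1) unfolding V_def openin_quotient_top by auto
    moreover have "None \<in> N \<longrightarrow> Z \<subseteq> V" using M Z unfolding V_def q_def by auto
    moreover have "None \<notin> N \<longrightarrow> V \<inter> Z = {}" using M Z unfolding V_def q_def T_def by auto
    moreover have "{x \<in> topspace X. Some x \<in> N} = V \<inter> topspace X"
      using M Z unfolding V_def q_def T_def by auto
    ultimately show ?R using M unfolding T_def by blast
  next
    assume R: ?R
    then obtain V where V: "openin B V" "None \<in> N \<longrightarrow> Z \<subseteq> V" "None \<notin> N \<longrightarrow> V \<inter> Z = {}"
          "{x \<in> topspace X. Some x \<in> N} = V \<inter> topspace X" by blast
    have VB: "V \<subseteq> topspace B" using V(1) openin_subset by auto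
    define M where "M = (if None \<in> N then {None} else {}) \<union> Some ` (V - Z)"
    have "M \<subseteq> q ` topspace B"
      using Z VB unfolding M_def q_def by (auto simp: image_iff)
    moreover have "{x \<in> topspace B. q x \<in> M} = V"
    proof (cases "None \<in> N")
      case True
      then show ?thesis using V VB Z unfolding M_def q_def by auto
    next
      case False
      then show ?thesis using V VB Z unfolding M_def q_def by auto
    qed
    ultimately have "openin (quotient_top B q) M"
      using V(1) by (simp add: openin_quotient_top)
    moreover have "N = M \<inter> T"
    proof (rule set_eqI)
      fix y show "y \<in> N \<longleftrightarrow> y \<in> M \<inter> T"
      proof (cases y)
        case None then show ?thesis using R unfolding M_def T_def by auto
      next
        case (Some x)
        have NT: "N \<subseteq> T" using R unfolding T_def by blast
        show ?thesis
        proof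
          assume "y \<in> N"
          then have "x \<in> topspace X" using NT Some unfolding T_def by auto
          moreover have "x \<in> V" using V(4) \<open>y \<in> N\<close> Some \<open>x \<in> topspace X\<close> by auto
          ultimately show "y \<in> M \<inter> T" using Z Some unfolding M_def T_def by auto
        next
          assume "y \<in> M \<inter> T"
          then have "x \<in> topspace X" "x \<in> V" using Some unfolding M_def T_def by (auto split: if_splits)
          then show "y \<in> N" using V(4) Some by auto
        qed
      qed
    qed
    ultimately show ?L unfolding zdef openin_subtopology by blast
  qed
qed

lemma homeo_Some_char:
  assumes top: "topspace Y' = Some ` topspace X"
    and op: "\<And>N. openin Y' N \<longleftrightarrow> N \<subseteq> Some ` topspace X \<and> openin X {x \<in> topspace X. Some x \<in> N}"
  shows "homeomorphic_map X Y' Some"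
  unfolding homeomorphic_map_maps
proof (rule exI[of _ the], unfold homeomorphic_maps_def, intro conjI)
  show "continuous_map X Y' Some"
    unfolding continuous_map_def
  proof (intro conjI allI impI)
    show "Some \<in> topspace X \<rightarrow> topspace Y'" using top by auto
  next
    fix N assume "openin Y' N"
    then show "openin X {x \<in> topspace X. Some x \<in> N}" using op by blast
  qed
next
  show "continuous_map Y' X the"
    unfolding continuous_map_def
  proof (intro conjI allI impI)
    show "the \<in> topspace Y' \<rightarrow> topspace X" using top by auto
  next
    fix U assume U: "openin X U"
    have UX: "U \<subseteq> topspace X" using openin_subset[OF U] .
    have eq: "{x \<in> topspace Y'. the x \<in> U} = Some ` U" using top UX by auto
    have "{x \<in> topspace X. Some x \<in> Some ` U} = U" using UX by auto
    then show "openin Y' {x \<in> topspace Y'. the x \<in> U}"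
      unfolding eq using op U UX by auto
  qed
qed (use top in auto)

lemma normal_one_point_aux:
  assumes reg: "regular_space Y" and p: "p \<in> S"
    and op: "openin Y (topspace Y - {p})"
    and nor: "normal_space (subtopology Y (topspace Y - {p}))"
    and S: "closedin Y S" and T: "closedin Y T" and d: "disjnt S T"
  shows "\<exists>U V. openin Y U \<and> openin Y V \<and> S \<subseteq> U \<and> T \<subseteq> V \<and> disjnt U V"
proof -
  have pT: "p \<in> topspace Y - T" using p d closedin_subset[OF S] by (auto simp: disjnt_def)
  obtain U0 V0 where U0: "openin Y U0" "openin Y V0" "p \<in> U0" "T \<subseteq> V0" "disjnt U0 V0"
    using reg T pT unfolding regular_space_def by metis
  let ?X = "topspace Y - {p}"
  have c1: "closedin (subtopology Y ?X) (S - U0)"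
    by (rule closedin_subset_topspace) (use S U0 closedin_subset[OF S] in auto)
  have c2: "closedin (subtopology Y ?X) T"
    by (rule closedin_subset_topspace) (use T pT closedin_subset[OF T] in auto)
  have "disjnt (S - U0) T" using d by (auto simp: disjnt_def)
  then obtain U1 V1 where U1: "openin (subtopology Y ?X) U1" "openin (subtopology Y ?X) V1"
      "S - U0 \<subseteq> U1" "T \<subseteq> V1" "disjnt U1 V1"
    using nor c1 c2 unfolding normal_space_def by metis
  have "openin Y U1" "openin Y V1" using U1 openin_open_subtopology[OF op] by auto
  then show ?thesis
    using U0 U1
    by (intro exI[of _ "U1 \<union> U0"] exI[of _ "V1 \<inter> V0"]) (auto simp: disjnt_def)
qed

lemma normal_one_point:
  assumes reg: "regular_space Y" and p: "p \<in> topspace Y"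
    and op: "openin Y (topspace Y - {p})"
    and nor: "normal_space (subtopology Y (topspace Y - {p}))"
  shows "normal_space Y"
  unfolding normal_space_def
proof (intro allI impI)
  fix S T assume H: "closedin Y S \<and> closedin Y T \<and> disjnt S T"
  show "\<exists>U V. openin Y U \<and> openin Y V \<and> S \<subseteq> U \<and> T \<subseteq> V \<and> disjnt U V"
  proof (cases "p \<in> S")
    case True
    from H have "closedin Y S" "closedin Y T" "disjnt S T" by auto
    from normal_one_point_aux[OF reg True op nor this] show ?thesis .
  next
    case pS: False
    show ?thesis
    proof (cases "p \<in> T")
      case True
      from H have "closedin Y T" "closedin Y S" "disjnt T S" by (auto simp: disjnt_sym)
      from normal_one_point_aux[OF reg True op nor this]
      obtain U V where "openin Y U" "openin Y V" "T \<subseteq> U" "S \<subseteq> V" "disjnt U V" by blast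
      then show ?thesis using disjnt_sym by blast
    next
      case False
      let ?X = "topspace Y - {p}"
      from H have SY: "closedin Y S" and TY: "closedin Y T" by auto
      have "S \<subseteq> ?X" using closedin_subset[OF SY] pS by auto
      from closedin_subset_topspace[OF SY this] have c1: "closedin (subtopology Y ?X) S" .
      have "T \<subseteq> ?X" using closedin_subset[OF TY] False by auto
      from closedin_subset_topspace[OF TY this] have c2: "closedin (subtopology Y ?X) T" .
      then obtain U1 V1 where U1: "openin (subtopology Y ?X) U1" "openin (subtopology Y ?X) V1"
          "S \<subseteq> U1" "T \<subseteq> V1" "disjnt U1 V1"
        using nor[unfolded normal_space_def, rule_format, OF conjI[OF c1 conjI[OF c2 conjunct2[OF conjunct2[OF H]]]]]
        by blast
      have "openin Y U1" "openin Y V1" using U1 openin_open_subtopology[OF op] by auto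
      then show ?thesis using U1(3-5) by blast
    qed
  qed
qed

lemma Ti_transfer:
  assumes reg: "completely_regular_space Y" and t1: "t1_space Y" and p: "p \<in> topspace Y"
    and hom: "homeomorphic_map X (subtopology Y (topspace Y - {p})) h"
    and Ti: "Ti_space i X"
  shows "Ti_space i Y"
proof -
  have regY: "regular_space Y" using reg completely_regular_imp_regular_space by blast
  have op: "\<And>S. p \<in> S \<Longrightarrow> openin (subtopology Y S) (topspace (subtopology Y S) - {p})"
  proof -
    fix S assume "p \<in> S"
    then have "closedin (subtopology Y S) {p}"
      using t1_space_subtopology[OF t1, of S] p by (simp add: t1_space_closedin_singleton)
    then show "openin (subtopology Y S) (topspace (subtopology Y S) - {p})"
      by (rule openin_diff[OF openin_topspace])
  qed
  have homsp: "X homeomorphic_space subtopology Y (topspace Y - {p})"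
    using hom homeomorphic_map_imp_homeomorphic_space by blast
  show ?thesis
  proof (cases i)
    case T3half then show ?thesis using reg t1 by simp
  next
    case T4
    then have "normal_space X" using Ti by simp
    then have "normal_space (subtopology Y (topspace Y - {p}))"
      using homeomorphic_normal_space[OF homsp] by simp
    moreover have "openin Y (topspace Y - {p})" using op[of "topspace Y"] p by simp
    ultimately have "normal_space Y" using normal_one_point[OF regY p] by simp
    then show ?thesis using T4 t1 by simp
  next
    case T5
    then have "hereditarily normal_space X" using Ti by simp
    then have hn: "hereditarily normal_space (subtopology Y (topspace Y - {p}))"
      using homeomorphic_hereditarily_normal_space[OF homsp] by simp
    have case1: "normal_space (subtopology Y S)" if "S \<subseteq> topspace Y - {p}" for S
    proof -
      have "subtopology Y S = subtopology (subtopology Y (topspace Y - {p})) S"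
        using that by (simp add: subtopology_subtopology Int_absorb1)
      moreover have "S \<subseteq> topspace (subtopology Y (topspace Y - {p}))" using that by auto
      ultimately show ?thesis using hn unfolding hereditarily_def by metis
    qed
    have "normal_space (subtopology Y S)" if S: "S \<subseteq> topspace Y" for S
    proof (cases "p \<in> S")
      case False then show ?thesis using case1 S by blast
    next
      case True
      have tS: "topspace (subtopology Y S) = S" using S by auto
      have "normal_space (subtopology (subtopology Y S) (topspace (subtopology Y S) - {p}))"
      proof -
        have "S - {p} \<subseteq> topspace Y - {p}" using S by blast
        then have "normal_space (subtopology Y (S - {p}))" by (rule case1)
        moreover have "S \<inter> (topspace Y \<inter> S - {p}) = S - {p}" using S by blast
        ultimately show ?thesis by (simp add: tS subtopology_subtopology)
      qed
      then show ?thesis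
        using normal_one_point[OF regular_space_subtopology[OF regY] _ op[OF True]] True tS p by simp
    qed
    then have "hereditarily normal_space Y" unfolding hereditarily_def by blast
    then show ?thesis using T5 t1 by simp
  qed
qed

context
  fixes X :: "'a topology" and B :: "'a topology"
  assumes sc: "stone_cech X B"
begin

lemma scB: "compact_space B" "Hausdorff_space B" "topspace X \<subseteq> topspace B"
  "subtopology B (topspace X) = X" "B closure_of (topspace X) = topspace B"
  using sc unfolding stone_cech_def by blast+

lemma scE: "continuous_map X (top_of_set {0..1::real}) f \<Longrightarrow>
   \<exists>g. continuous_map B (top_of_set {0..1::real}) g \<and> (\<forall>x\<in>topspace X. g x = f x)"
  using sc unfolding stone_cech_def by (elim conjE) (rule allE, assumption, erule impE)

lemma openX: "openin X U \<longleftrightarrow> (\<exists>V. openin B V \<and> U = V \<inter> topspace X)"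
  by (metis openin_subtopology scB(4))

lemma dense_pt: assumes "openin B W" "b \<in> W" shows "\<exists>x\<in>topspace X. x \<in> W"
proof -
  have "b \<in> B closure_of (topspace X)" using scB(5) openin_subset[OF assms(1)] assms(2) by auto
  then show ?thesis using assms unfolding in_closure_of by blast
qed

definition good :: "'a set \<Rightarrow> bool" where
  "good Z \<longleftrightarrow> Z \<subseteq> topspace B - topspace X \<and> Z \<noteq> {} \<and> compactin B Z"

lemma good_closed: "good Z \<Longrightarrow> closedin B Z"
  unfolding good_def using compactin_imp_closedin scB(2) by blast

lemma Zsets_good: assumes "topspace X \<noteq> {}" "Z \<in> Zsets X B" shows "good Z"
proof -
  obtain x where "x \<in> topspace X" using assms(1) by blast
  then obtain C where "C \<in> connected_components_of X"
    using Union_connected_components_of[of X] by (metis UnionE)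
  then show ?thesis using assms(2) unfolding Zsets_def good_def by auto
qed

lemma openin_zeta': "good Z \<Longrightarrow> openin (zeta X B Z) N \<longleftrightarrow> N \<subseteq> insert None (Some ` topspace X) \<and>
     (\<exists>V. openin B V \<and> (None \<in> N \<longrightarrow> Z \<subseteq> V) \<and> (None \<notin> N \<longrightarrow> V \<inter> Z = {})
          \<and> {x \<in> topspace X. Some x \<in> N} = V \<inter> topspace X)"
  unfolding good_def by (rule openin_zeta) (use scB(3) in auto)

lemma topspace_zeta': "good Z \<Longrightarrow> topspace (zeta X B Z) = insert None (Some ` topspace X)"
  unfolding good_def by (rule topspace_zeta) (use scB(3) in auto)

lemma zeta_nbhd:
  assumes "good Z" "openin (zeta X B Z) N" "None \<in> N"
  shows "\<exists>V. openin B V \<and> Z \<subseteq> V \<and> V \<inter> topspace X \<subseteq> {x. Some x \<in> N}"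
proof -
  obtain V where "openin B V" "None \<in> N \<longrightarrow> Z \<subseteq> V"
      "{x \<in> topspace X. Some x \<in> N} = V \<inter> topspace X"
    using assms(2) unfolding openin_zeta'[OF assms(1)] by blast
  then show ?thesis using assms(3) by blast
qed

lemma zeta_open_X:
  assumes "good Z" "openin B V"
  shows "openin (zeta X B Z) (Some ` (V \<inter> topspace X))"
proof -
  have "openin B (V - Z)" using openin_diff[OF assms(2) good_closed[OF assms(1)]] .
  moreover have "(V - Z) \<inter> topspace X = V \<inter> topspace X" using assms(1) unfolding good_def by auto
  moreover have "{x \<in> topspace X. Some x \<in> Some ` (V \<inter> topspace X)} = V \<inter> topspace X" by auto
  ultimately show ?thesis
    unfolding openin_zeta'[OF assms(1)] by (intro conjI exI[of _ "V - Z"]) auto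
qed

lemma zeta_open_None:
  assumes "good Z" "openin B V" "Z \<subseteq> V"
  shows "openin (zeta X B Z) (insert None (Some ` (V \<inter> topspace X)))"
proof -
  have "{x \<in> topspace X. Some x \<in> insert None (Some ` (V \<inter> topspace X))} = V \<inter> topspace X" by auto
  then show ?thesis
    unfolding openin_zeta'[OF assms(1)] using assms by (intro conjI exI[of _ "V"]) auto
qed

lemma zeta_le:
  assumes "good Z1" "good Z2" "Z1 \<subseteq> Z2"
  shows "opc_le X (zeta X B Z2) (zeta X B Z1)"
  unfolding opc_le_def
proof (intro exI[of _ id] conjI)
  show "continuous_map (zeta X B Z1) (zeta X B Z2) id"
    unfolding continuous_map_def
  proof (intro conjI allI impI)
    show "id \<in> topspace (zeta X B Z1) \<rightarrow> topspace (zeta X B Z2)"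
      using topspace_zeta'[OF assms(1)] topspace_zeta'[OF assms(2)] by auto
  next
    fix U assume U: "openin (zeta X B Z2) U"
    then obtain V where V: "U \<subseteq> insert None (Some ` topspace X)" "openin B V"
      "None \<in> U \<longrightarrow> Z2 \<subseteq> V" "None \<notin> U \<longrightarrow> V \<inter> Z2 = {}"
      "{x \<in> topspace X. Some x \<in> U} = V \<inter> topspace X"
      unfolding openin_zeta'[OF assms(2)] by blast
    have "openin (zeta X B Z1) U"
      unfolding openin_zeta'[OF assms(1)] using V assms(3) by (intro conjI exI[of _ V]) auto
    moreover have "{x \<in> topspace (zeta X B Z1). id x \<in> U} = U"
      using V(1) topspace_zeta'[OF assms(1)] by auto
    ultimately show "openin (zeta X B Z1) {x \<in> topspace (zeta X B Z1). id x \<in> U}" by simp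
  qed
qed auto

lemma zeta_anti:
  assumes g1: "good Z1" and g2: "good Z2" and f: "continuous_map (zeta X B Z1) (zeta X B Z2) f"
    and fx: "\<forall>x\<in>topspace X. f (Some x) = Some x"
  shows "Z1 \<subseteq> Z2"
proof -
  have T1: "topspace (zeta X B Z1) = insert None (Some ` topspace X)" using topspace_zeta'[OF g1] .
  have T2: "topspace (zeta X B Z2) = insert None (Some ` topspace X)" using topspace_zeta'[OF g2] .
  have pre: "\<And>N. openin (zeta X B Z2) N \<Longrightarrow> f None \<in> N \<Longrightarrow>
      \<exists>V. openin B V \<and> Z1 \<subseteq> V \<and> V \<inter> topspace X \<subseteq> {x. Some x \<in> N}"
  proof -
    fix N assume N: "openin (zeta X B Z2) N" "f None \<in> N"
    let ?P = "{x \<in> topspace (zeta X B Z1). f x \<in> N}"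
    have "openin (zeta X B Z1) ?P" using openin_continuous_map_preimage[OF f N(1)] .
    moreover have "None \<in> ?P" using N T1 by auto
    ultimately obtain V where V: "openin B V" "Z1 \<subseteq> V" "V \<inter> topspace X \<subseteq> {x. Some x \<in> ?P}"
      using zeta_nbhd[OF g1] by blast
    have "V \<inter> topspace X \<subseteq> {x. Some x \<in> N}"
    proof
      fix x assume x: "x \<in> V \<inter> topspace X"
      then have "f (Some x) \<in> N" using V(3) by auto
      then show "x \<in> {x. Some x \<in> N}" using fx x by auto
    qed
    then show "\<exists>V. openin B V \<and> Z1 \<subseteq> V \<and> V \<inter> topspace X \<subseteq> {x. Some x \<in> N}" using V by blast
  qed
  have fN: "f None = None"
  proof (rule ccontr)
    assume ne: "f None \<noteq> None"
    have "f None \<in> topspace (zeta X B Z2)" using f T1 unfolding continuous_map_def by auto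
    then obtain x0 where x0: "x0 \<in> topspace X" "f None = Some x0" using ne T2 by auto
    obtain b where b: "b \<in> Z1" using g1 unfolding good_def by auto
    have bB: "b \<in> topspace B" "b \<notin> topspace X" using b g1 unfolding good_def by auto
    then have bx: "b \<noteq> x0" using x0 by auto
    have x0B: "x0 \<in> topspace B" using x0 scB(3) by blast
    from scB(2)[unfolded Hausdorff_space_def, rule_format, OF conjI[OF bB(1) conjI[OF x0B bx]]]
    obtain Vb Vx where VV: "openin B Vb" "openin B Vx" "b \<in> Vb" "x0 \<in> Vx" "disjnt Vb Vx"
      by blast
    have "openin (zeta X B Z2) (Some ` (Vx \<inter> topspace X))" using zeta_open_X[OF g2 VV(2)] .
    moreover have "f None \<in> Some ` (Vx \<inter> topspace X)" using x0 VV by auto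
    ultimately obtain V where V: "openin B V" "Z1 \<subseteq> V"
      "V \<inter> topspace X \<subseteq> {x. Some x \<in> Some ` (Vx \<inter> topspace X)}" using pre by blast
    have "openin B (V \<inter> Vb)" "b \<in> V \<inter> Vb" using V VV b by auto
    then obtain x where "x \<in> topspace X" "x \<in> V \<inter> Vb" using dense_pt by blast
    then show False using V(3) VV(5) by (auto simp: disjnt_def)
  qed
  show ?thesis
  proof
    fix b assume b: "b \<in> Z1"
    show "b \<in> Z2"
    proof (rule ccontr)
      assume nb: "b \<notin> Z2"
      have bB: "b \<in> topspace B" using b g1 unfolding good_def by auto
      have c1: "compactin B Z2" using g2 unfolding good_def by blast
      have c2: "compactin B {b}" using bB by simp
      have d: "disjnt Z2 {b}" using nb by simp
      obtain U W where UW: "openin B U" "openin B W" "Z2 \<subseteq> U" "{b} \<subseteq> W" "disjnt U W"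
        using Hausdorff_space_compact_separation[OF scB(2) c1 c2 d] by blast
      have "openin (zeta X B Z2) (insert None (Some ` (U \<inter> topspace X)))"
        using zeta_open_None[OF g2 UW(1,3)] .
      then obtain V where V: "openin B V" "Z1 \<subseteq> V"
        "V \<inter> topspace X \<subseteq> {x. Some x \<in> insert None (Some ` (U \<inter> topspace X))}"
        using pre fN by blast
      have "openin B (V \<inter> W)" "b \<in> V \<inter> W" using V UW b by auto
      then obtain x where "x \<in> topspace X" "x \<in> V \<inter> W" using dense_pt by blast
      then show False using V(3) UW(5) by (auto simp: disjnt_def)
    qed
  qed
qed

definition qmap :: "'a set \<Rightarrow> 'a \<Rightarrow> 'a option" where
  "qmap Z = (\<lambda>p. if p \<in> Z then None else Some p)"

lemma zeta_eq: "zeta X B Z = subtopology (quotient_top B (qmap Z)) (insert None (Some ` topspace X))"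
  unfolding zeta_def qmap_def ..

lemma Q_open_Some:
  assumes "openin B V" "V \<inter> Z = {}"
  shows "openin (quotient_top B (qmap Z)) (Some ` V)"
proof -
  have VB: "V \<subseteq> topspace B" using openin_subset[OF assms(1)] .
  have "Some ` V \<subseteq> qmap Z ` topspace B"
  proof
    fix y assume "y \<in> Some ` V"
    then obtain v where "v \<in> V" "y = Some v" by blast
    then show "y \<in> qmap Z ` topspace B" using assms(2) VB unfolding qmap_def
      by (intro image_eqI[of _ _ v]) auto
  qed
  moreover have "{x \<in> topspace B. qmap Z x \<in> Some ` V} = V"
    using VB assms(2) unfolding qmap_def by auto
  ultimately show ?thesis using assms(1) by (simp add: openin_quotient_top)
qed

lemma Q_open_None:
  assumes "openin B V" "Z \<subseteq> V" "Z \<noteq> {}"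
  shows "openin (quotient_top B (qmap Z)) (insert None (Some ` (V - Z)))"
proof -
  have VB: "V \<subseteq> topspace B" using openin_subset[OF assms(1)] .
  have "insert None (Some ` (V - Z)) \<subseteq> qmap Z ` topspace B"
  proof
    fix y assume "y \<in> insert None (Some ` (V - Z))"
    then show "y \<in> qmap Z ` topspace B"
    proof
      assume "y = None"
      obtain z where "z \<in> Z" using assms(3) by blast
      then show ?thesis using \<open>y = None\<close> assms(2) VB unfolding qmap_def
        by (intro image_eqI[of _ _ z]) auto
    next
      assume "y \<in> Some ` (V - Z)"
      then obtain v where "v \<in> V - Z" "y = Some v" by blast
      then show ?thesis using VB unfolding qmap_def by (intro image_eqI[of _ _ v]) auto
    qed
  qed
  moreover have "{x \<in> topspace B. qmap Z x \<in> insert None (Some ` (V - Z))} = V"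
    using VB assms(2) unfolding qmap_def by auto
  ultimately show ?thesis using assms(1) by (simp add: openin_quotient_top)
qed

lemma Q_compact_Hausdorff:
  assumes g: "good Z"
  shows "compact_space (quotient_top B (qmap Z))" "Hausdorff_space (quotient_top B (qmap Z))"
proof -
  let ?Q = "quotient_top B (qmap Z)"
  have tQ: "topspace ?Q = qmap Z ` topspace B" by (rule topspace_quotient_top)
  have cont: "continuous_map B ?Q (qmap Z)"
    unfolding continuous_map_def
    by (auto simp: tQ openin_quotient_top)
  have "compactin ?Q (qmap Z ` topspace B)"
    using image_compactin[OF scB(1)[unfolded compact_space_def] cont] .
  then show "compact_space ?Q" unfolding compact_space_def tQ .
  have Zc: "closedin B Z" "compactin B Z" "Z \<noteq> {}" "Z \<subseteq> topspace B"
    using good_closed[OF g] g unfolding good_def by auto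
  show "Hausdorff_space ?Q"
    unfolding Hausdorff_space_def
  proof (intro allI impI)
    fix x y assume H: "x \<in> topspace ?Q \<and> y \<in> topspace ?Q \<and> x \<noteq> y"
    show "\<exists>U V. openin ?Q U \<and> openin ?Q V \<and> x \<in> U \<and> y \<in> V \<and> disjnt U V"
    proof (cases x)
      case None
      then obtain b where b: "y = Some b" "b \<in> topspace B" "b \<notin> Z"
        using H[unfolded tQ] unfolding qmap_def by (auto split: if_splits)
      have d: "disjnt Z {b}" using b by simp
      have c2: "compactin B {b}" using b by simp
      obtain U W where UW: "openin B U" "openin B W" "Z \<subseteq> U" "{b} \<subseteq> W" "disjnt U W"
        using Hausdorff_space_compact_separation[OF scB(2) Zc(2) c2 d] by blast
      have "W \<inter> Z = {}" using UW by (auto simp: disjnt_def)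
      then have "openin ?Q (Some ` W)" using Q_open_Some UW by blast
      moreover have "openin ?Q (insert None (Some ` (U - Z)))" using Q_open_None UW Zc by blast
      moreover have "disjnt (insert None (Some ` (U - Z))) (Some ` W)"
        using UW(5) by (auto simp: disjnt_def)
      ultimately show ?thesis using None b UW by blast
    next
      case (Some a)
      then have a: "a \<in> topspace B" "a \<notin> Z"
        using H[unfolded tQ] unfolding qmap_def by (auto split: if_splits)
      show ?thesis
      proof (cases y)
        case None
        have d: "disjnt Z {a}" using a by simp
        have c2: "compactin B {a}" using a by simp
        obtain U W where UW: "openin B U" "openin B W" "Z \<subseteq> U" "{a} \<subseteq> W" "disjnt U W"
          using Hausdorff_space_compact_separation[OF scB(2) Zc(2) c2 d] by blast
        have "W \<inter> Z = {}" using UW by (auto simp: disjnt_def)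
        then have "openin ?Q (Some ` W)" using Q_open_Some UW by blast
        moreover have "openin ?Q (insert None (Some ` (U - Z)))" using Q_open_None UW Zc by blast
        moreover have "disjnt (Some ` W) (insert None (Some ` (U - Z)))"
          using UW(5) by (auto simp: disjnt_def)
        ultimately show ?thesis using None Some UW by blast
      next
        case (Some b)
        then have b: "b \<in> topspace B" "b \<notin> Z"
          using H[unfolded tQ] unfolding qmap_def by (auto split: if_splits)
        have ab: "a \<noteq> b" using H \<open>x = Some a\<close> Some by auto
        from scB(2)[unfolded Hausdorff_space_def, rule_format, OF conjI[OF a(1) conjI[OF b(1) ab]]]
        obtain U W where UW: "openin B U" "openin B W" "a \<in> U" "b \<in> W" "disjnt U W"
          by blast
        have "openin B (U - Z)" "openin B (W - Z)"
          using UW Zc(1) by (auto intro: openin_diff)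
        then have "openin ?Q (Some ` (U - Z))" "openin ?Q (Some ` (W - Z))"
          using Q_open_Some by auto
        moreover have "disjnt (Some ` (U - Z)) (Some ` (W - Z))"
          using UW(5) by (auto simp: disjnt_def)
        ultimately show ?thesis using \<open>x = Some a\<close> Some UW a b by blast
      qed
    qed
  qed
qed

lemma zeta_sep:
  assumes g: "good Z"
  shows "completely_regular_space (zeta X B Z)" "t1_space (zeta X B Z)" "Hausdorff_space (zeta X B Z)"
proof -
  note QC = Q_compact_Hausdorff[OF g]
  have "normal_space (quotient_top B (qmap Z))"
    using compact_Hausdorff_or_regular_imp_normal_space QC by blast
  then have "completely_regular_space (quotient_top B (qmap Z))"
    using normal_imp_completely_regular_space_A Hausdorff_imp_t1_space QC(2) by blast
  then show "completely_regular_space (zeta X B Z)"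
    unfolding zeta_eq by (rule completely_regular_space_subtopology)
  show "Hausdorff_space (zeta X B Z)"
    unfolding zeta_eq using QC(2) by (rule Hausdorff_space_subtopology)
  then show "t1_space (zeta X B Z)" by (rule Hausdorff_imp_t1_space)
qed

lemma zeta_homeo:
  assumes g: "good Z"
  shows "homeomorphic_map X (subtopology (zeta X B Z) (Some ` topspace X)) Some"
proof (rule homeo_Some_char)
  show "topspace (subtopology (zeta X B Z) (Some ` topspace X)) = Some ` topspace X"
    using topspace_zeta'[OF g] by auto
next
  fix N
  show "openin (subtopology (zeta X B Z) (Some ` topspace X)) N \<longleftrightarrow>
        N \<subseteq> Some ` topspace X \<and> openin X {x \<in> topspace X. Some x \<in> N}"
  proof
    assume "openin (subtopology (zeta X B Z) (Some ` topspace X)) N"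
    then obtain N' where N': "openin (zeta X B Z) N'" "N = N' \<inter> Some ` topspace X"
      unfolding openin_subtopology by blast
    then obtain V where V: "openin B V" "{x \<in> topspace X. Some x \<in> N'} = V \<inter> topspace X"
      unfolding openin_zeta'[OF g] by blast
    have "{x \<in> topspace X. Some x \<in> N} = {x \<in> topspace X. Some x \<in> N'}" using N' by auto
    then show "N \<subseteq> Some ` topspace X \<and> openin X {x \<in> topspace X. Some x \<in> N}"
      using V N' openX by auto
  next
    assume H: "N \<subseteq> Some ` topspace X \<and> openin X {x \<in> topspace X. Some x \<in> N}"
    then obtain V where V: "openin B V" "{x \<in> topspace X. Some x \<in> N} = V \<inter> topspace X"
      using openX by blast
    have "N = Some ` (V \<inter> topspace X)"
    proof
      show "N \<subseteq> Some ` (V \<inter> topspace X)"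
      proof
        fix y assume "y \<in> N"
        then obtain x where "x \<in> topspace X" "y = Some x" using H by blast
        then show "y \<in> Some ` (V \<inter> topspace X)" using V(2) \<open>y \<in> N\<close> by blast
      qed
    next
      show "Some ` (V \<inter> topspace X) \<subseteq> N" using V(2) by blast
    qed
    then have "openin (zeta X B Z) N" using zeta_open_X[OF g V(1)] by simp
    moreover have "N = N \<inter> Some ` topspace X" using H by blast
    ultimately show "openin (subtopology (zeta X B Z) (Some ` topspace X)) N"
      unfolding openin_subtopology by blast
  qed
qed


lemma None_closure:
  assumes g: "good Z" and C: "C \<subseteq> topspace X" and ZC: "Z \<inter> B closure_of C \<noteq> {}"
  shows "None \<in> zeta X B Z closure_of (Some ` C)"
  unfolding in_closure_of
proof (intro conjI allI impI)
  show "None \<in> topspace (zeta X B Z)" using topspace_zeta'[OF g] by simp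
next
  fix T assume T: "None \<in> T \<and> openin (zeta X B Z) T"
  then obtain V where V: "openin B V" "Z \<subseteq> V" "V \<inter> topspace X \<subseteq> {x. Some x \<in> T}"
    using zeta_nbhd[OF g] by blast
  obtain b where b: "b \<in> Z" "b \<in> B closure_of C" using ZC by blast
  then obtain y where "y \<in> C" "y \<in> V" using V unfolding in_closure_of by blast
  then show "\<exists>y. y \<in> Some ` C \<and> y \<in> T" using V(3) C by blast
qed

lemma zeta_in_opc:
  assumes ne: "topspace X \<noteq> {}" and Ti: "Ti_space i X" and Z: "Z \<in> Zsets X B"
  shows "zeta X B Z \<in> one_point_connectifications i X"
proof -
  have g: "good Z" using Zsets_good[OF ne Z] .
  let ?Y = "zeta X B Z"
  have T: "topspace ?Y = insert None (Some ` topspace X)" using topspace_zeta'[OF g] .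
  have hom: "homeomorphic_map X (subtopology ?Y (Some ` topspace X)) Some" using zeta_homeo[OF g] .
  have contS: "continuous_map X ?Y Some"
    using homeomorphic_imp_continuous_map[OF hom] continuous_map_in_subtopology by blast
  have ZB: "Z \<subseteq> topspace B" using g unfolding good_def by blast
  have Zne: "Z \<noteq> {}" using g unfolding good_def by blast
  have "Z \<inter> B closure_of (topspace X) = Z" unfolding scB(5) using ZB by blast
  then have "Z \<inter> B closure_of (topspace X) \<noteq> {}" using Zne by simp
  then have "None \<in> ?Y closure_of (Some ` topspace X)" by (rule None_closure[OF g subset_refl])
  moreover have "Some ` topspace X \<subseteq> ?Y closure_of (Some ` topspace X)"
    using T by (intro closure_of_subset) auto
  then have "topspace ?Y \<subseteq> ?Y closure_of (Some ` topspace X)"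
    unfolding T using calculation by (simp only: insert_subset)
  then have clo: "?Y closure_of (Some ` topspace X) = topspace ?Y"
    using closure_of_subset_topspace by (rule subset_antisym[rotated])
  define U where "U = (\<lambda>C. insert None (Some ` C)) ` connected_components_of X"
  have "connectedin ?Y S" if "S \<in> U" for S
  proof -
    obtain C where C: "C \<in> connected_components_of X" "S = insert None (Some ` C)"
      using \<open>S \<in> U\<close> unfolding U_def by blast
    have CX: "C \<subseteq> topspace X" using C(1) connected_components_of_subset by blast
    have c: "connectedin ?Y (Some ` C)"
      using connectedin_continuous_map_image[OF contS connectedin_connected_components_of[OF C(1)]] .
    have "None \<in> ?Y closure_of (Some ` C)"
      using None_closure[OF g CX] Z C(1) unfolding Zsets_def by blast
    moreover have "Some ` C \<subseteq> ?Y closure_of (Some ` C)"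
      using T CX by (intro closure_of_subset) auto
    ultimately show ?thesis
      using connectedin_intermediate_closure_of[OF c] C(2) by blast
  qed
  moreover have "None \<in> \<Inter> U" unfolding U_def by blast
  ultimately have "connectedin ?Y (\<Union> U)" by (intro connectedin_Union) auto
  moreover have "\<Union> U = topspace ?Y"
  proof
    show "\<Union> U \<subseteq> topspace ?Y" unfolding U_def T using connected_components_of_subset by fastforce
  next
    obtain C where "C \<in> connected_components_of X"
      using ne Union_connected_components_of[of X] by (metis UnionE ex_in_conv)
    then have "None \<in> \<Union> U" unfolding U_def by blast
    moreover have "Some x \<in> \<Union> U" if xX: "x \<in> topspace X" for x
    proof -
      obtain C where "C \<in> connected_components_of X" "x \<in> C"
        using xX Union_connected_components_of[of X] by (metis UnionE)
      then show ?thesis unfolding U_def by blast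
    qed
    ultimately show "topspace ?Y \<subseteq> \<Union> U" unfolding T by blast
  qed
  ultimately have conn: "connected_space ?Y" using connectedin_topspace by metis
  have TN: "topspace ?Y - {None} = Some ` topspace X" using T by auto
  have hom': "homeomorphic_map X (subtopology ?Y (topspace ?Y - {None})) Some"
    unfolding TN by (rule hom)
  have pN: "None \<in> topspace ?Y" unfolding T by (rule insertI1)
  have Tiy: "Ti_space i ?Y"
    by (rule Ti_transfer[OF zeta_sep(1)[OF g] zeta_sep(2)[OF g] pN hom' Ti])
  show ?thesis unfolding one_point_connectifications_def
    by (intro CollectI conjI T hom clo conn Tiy)
qed


context
  fixes Y :: "'a option topology" and i :: sep_axiom
  assumes ne: "topspace X \<noteq> {}" and lc: "locally_connected_space X"
    and Yopc: "Y \<in> one_point_connectifications i X"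
begin

lemma Yb: "topspace Y = insert None (Some ` topspace X)"
  "homeomorphic_map X (subtopology Y (Some ` topspace X)) Some"
  "connected_space Y" "Ti_space i Y"
  using Yopc unfolding one_point_connectifications_def by blast+

lemma Ysep: "completely_regular_space Y" "t1_space Y" "Hausdorff_space Y"
proof -
  show cr: "completely_regular_space Y"
  proof (cases i)
    case T3half then show ?thesis using Yb(4) by simp
  next
    case T4 then have "normal_space Y" "t1_space Y" using Yb(4) by simp_all
    then show ?thesis by (rule normal_imp_completely_regular_space_A)
  next
    case T5
    then have "hereditarily normal_space Y" "t1_space Y" using Yb(4) by simp_all
    then show ?thesis using hereditarily_inc normal_imp_completely_regular_space_A by blast
  qed
  show t1: "t1_space Y" using Yb(4) by (cases i) simp_all
  show "Hausdorff_space Y"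
    using regular_t1_imp_Hausdorff_space[OF completely_regular_imp_regular_space[OF cr] t1] .
qed

definition XU :: "'a option set \<Rightarrow> 'a set" where
  "XU U = {x \<in> topspace X. Some x \<in> U}"

definition ZY :: "'a set" where
  "ZY = \<Inter> ((\<lambda>U. B closure_of XU U) ` {U. openin Y U \<and> None \<in> U})"

lemma SomeX_open: "openin Y (Some ` topspace X)"
proof -
  have "closedin Y {None}" using Ysep(2) Yb(1) by (simp add: t1_space_closedin_singleton)
  then have "openin Y (topspace Y - {None})" by (rule openin_diff[OF openin_topspace])
  moreover have "topspace Y - {None} = Some ` topspace X" using Yb(1) by auto
  ultimately show ?thesis by simp
qed

lemma contSome: "continuous_map X Y Some"
  using homeomorphic_imp_continuous_map[OF Yb(2)] continuous_map_in_subtopology by blast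

lemma Y1:
  assumes N: "N \<subseteq> Some ` topspace X"
  shows "openin Y N \<longleftrightarrow> (\<exists>V. openin B V \<and> XU N = V \<inter> topspace X)"
proof -
  have e: "N = Some ` (XU N)" using N unfolding XU_def by auto
  have s: "XU N \<subseteq> topspace X" unfolding XU_def by auto
  have "openin Y N \<longleftrightarrow> openin (subtopology Y (Some ` topspace X)) N"
    using openin_open_subtopology[OF SomeX_open] N by simp
  also have "\<dots> \<longleftrightarrow> openin X (XU N)"
    using homeomorphic_map_openness[OF Yb(2) s] e by simp
  also have "\<dots> \<longleftrightarrow> (\<exists>V. openin B V \<and> XU N = V \<inter> topspace X)" by (rule openX)
  finally show ?thesis .
qed

lemma Yopen_XU:
  assumes "openin Y U"
  shows "\<exists>V. openin B V \<and> XU U = V \<inter> topspace X"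
proof -
  have "openin Y (U \<inter> Some ` topspace X)" using assms SomeX_open by (rule openin_Int)
  moreover have "XU (U \<inter> Some ` topspace X) = XU U" unfolding XU_def by auto
  ultimately show ?thesis using Y1[of "U \<inter> Some ` topspace X"] by auto
qed

lemma ZY_B: "ZY \<subseteq> topspace B"
proof -
  have "openin Y (topspace Y)" by (rule openin_topspace)
  moreover have "None \<in> topspace Y" using Yb(1) by simp
  ultimately have "ZY \<subseteq> B closure_of XU (topspace Y)" unfolding ZY_def
    by (intro Inter_lower imageI CollectI conjI)
  then show ?thesis using closure_of_subset_topspace by (rule order_trans)
qed

lemma ZY_closed: "closedin B ZY"
proof -
  have "openin Y (topspace Y)" by (rule openin_topspace)
  moreover have "None \<in> topspace Y" using Yb(1) by simp
  ultimately have "topspace Y \<in> {U. openin Y U \<and> None \<in> U}" by (intro CollectI conjI)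
  then have "(\<lambda>U. B closure_of XU U) ` {U. openin Y U \<and> None \<in> U} \<noteq> {}" by (intro notI) simp
  then show ?thesis unfolding ZY_def by (rule closedin_Inter) (auto simp only: closedin_closure_of)
qed

lemma ZY_X: "ZY \<inter> topspace X = {}"
proof (rule ccontr)
  assume "ZY \<inter> topspace X \<noteq> {}"
  then obtain x where x: "x \<in> ZY" "x \<in> topspace X" by blast
  have "None \<in> topspace Y" "Some x \<in> topspace Y" "None \<noteq> Some x" using Yb(1) x by auto
  from Ysep(3)[unfolded Hausdorff_space_def, rule_format, OF conjI[OF this(1) conjI[OF this(2,3)]]]
  obtain U U' where UU: "openin Y U" "openin Y U'" "None \<in> U" "Some x \<in> U'" "disjnt U U'" by blast
  obtain V' where V': "openin B V'" "XU U' = V' \<inter> topspace X" using Yopen_XU[OF UU(2)] by blast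
  have "x \<in> V'" using V'(2) x UU(4) unfolding XU_def by blast
  have "x \<in> B closure_of XU U" using x(1) UU(1,3) unfolding ZY_def by blast
  then obtain y where y: "y \<in> XU U" "y \<in> V'" using V'(1) \<open>x \<in> V'\<close> unfolding in_closure_of by blast
  then have "y \<in> XU U'" using V'(2) unfolding XU_def by blast
  then show False using y(1) UU(5) unfolding XU_def disjnt_def by blast
qed

lemma key:
  assumes K: "closedin B K" and KZ: "K \<inter> ZY = {}"
  shows "\<exists>U. openin Y U \<and> None \<in> U \<and> B closure_of XU U \<inter> K = {}"
proof -
  define F where "F = (\<lambda>U. B closure_of XU U) ` {U. openin Y U \<and> None \<in> U}"
  have cK: "compactin B K" using closedin_compact_space[OF scB(1) K] .
  have clF: "\<forall>C\<in>F. closedin B C" unfolding F_def by auto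
  have "K \<inter> \<Inter>F = {}" using KZ unfolding ZY_def F_def .
  then have "\<exists>G. finite G \<and> G \<subseteq> F \<and> K \<inter> \<Inter>G = {}"
    using cK clF unfolding compactin_fip by blast
  then obtain G where G: "finite G" "G \<subseteq> F" "K \<inter> \<Inter>G = {}" by blast
  then obtain H where H: "H \<subseteq> {U. openin Y U \<and> None \<in> U}" "finite H"
      "G = (\<lambda>U. B closure_of XU U) ` H"
    using finite_subset_image[OF G(1) G(2)[unfolded F_def]] by blast
  define U0 where "U0 = topspace Y \<inter> \<Inter>H"
  have oU0: "openin Y U0"
  proof (cases "H = {}")
    case True then show ?thesis unfolding U0_def by (simp only: Inter_empty Int_UNIV_right openin_topspace)
  next
    case False
    have "openin Y (\<Inter>H)" using H(1,2) False by (intro openin_Inter) auto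
    then show ?thesis unfolding U0_def by (intro openin_Int openin_topspace)
  qed
  have nU0: "None \<in> U0"
  proof -
    have "None \<in> topspace Y" by (simp add: Yb(1))
    moreover have "\<forall>U\<in>H. None \<in> U" using H(1) by blast
    ultimately show ?thesis unfolding U0_def by blast
  qed
  have "B closure_of XU U0 \<subseteq> \<Inter>G"
  proof
    fix b assume b: "b \<in> B closure_of XU U0"
    show "b \<in> \<Inter>G"
    proof
      fix C assume "C \<in> G"
      then obtain U where U: "U \<in> H" "C = B closure_of XU U" using H(3) by blast
      have "XU U0 \<subseteq> XU U" using U(1) unfolding U0_def XU_def by blast
      then show "b \<in> C" using b U(2) closure_of_mono by blast
    qed
  qed
  then have "B closure_of XU U0 \<inter> K = {}" using G(3) by blast
  then show ?thesis using oU0 nU0 by blast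
qed

lemma XU_sub: "XU U \<subseteq> topspace X" unfolding XU_def by blast

lemma XU_B: "XU U \<subseteq> topspace B" using XU_sub scB(3) by blast

lemma ZY_comp:
  assumes C: "C \<in> connected_components_of X"
  shows "ZY \<inter> B closure_of C \<noteq> {}"
proof
  assume E: "ZY \<inter> B closure_of C = {}"
  have CX: "C \<subseteq> topspace X" using C connected_components_of_subset by blast
  have "B closure_of C \<inter> ZY = {}" using E by blast
  then obtain U where U: "openin Y U" "None \<in> U" "B closure_of XU U \<inter> B closure_of C = {}"
    using key[OF closedin_closure_of] by blast
  have "XU U \<subseteq> B closure_of XU U" using XU_B by (rule closure_of_subset)
  moreover have "C \<subseteq> B closure_of C" using CX scB(3) by (intro closure_of_subset) blast
  ultimately have UC: "XU U \<inter> C = {}" using U(3) by blast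
  define D where "D = Some ` C"
  have DX: "D \<subseteq> Some ` topspace X" unfolding D_def using CX by blast
  have XUD: "XU D = C" unfolding XU_def D_def using CX by blast
  have oC: "openin X C" using openin_connected_components_of_locally_connected_space[OF lc C] .
  have oD: "openin Y D" using Y1[OF DX] oC unfolding XUD openX by blast
  have cC: "closedin X C" using closedin_connected_components_of[OF C] .
  have oXC: "openin X (topspace X - C)" using openin_diff[OF openin_topspace cC] .
  have s2: "Some ` (topspace X - C) \<subseteq> Some ` topspace X" by blast
  have "XU (Some ` (topspace X - C)) = topspace X - C" unfolding XU_def by blast
  then have o2: "openin Y (Some ` (topspace X - C))" using Y1[OF s2] oXC unfolding openX by simp
  have UT: "U \<subseteq> topspace Y" using openin_subset[OF U(1)] .
  have "topspace Y - D = U \<union> Some ` (topspace X - C)"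
  proof
    show "topspace Y - D \<subseteq> U \<union> Some ` (topspace X - C)"
    proof
      fix y assume y: "y \<in> topspace Y - D"
      show "y \<in> U \<union> Some ` (topspace X - C)"
      proof (cases y)
        case None then show ?thesis using U(2) by simp
      next
        case (Some x) then show ?thesis using y unfolding Yb(1) D_def by blast
      qed
    qed
  next
    show "U \<union> Some ` (topspace X - C) \<subseteq> topspace Y - D"
    proof
      fix y assume y: "y \<in> U \<union> Some ` (topspace X - C)"
      show "y \<in> topspace Y - D"
      proof (cases "y \<in> U")
        case True
        have "y \<notin> D"
        proof
          assume "y \<in> D"
          then obtain x where "x \<in> C" "y = Some x" unfolding D_def by blast
          then have "x \<in> XU U" using True CX unfolding XU_def by blast
          then show False using UC \<open>x \<in> C\<close> by blast
        qed
        then show ?thesis using True UT by blast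
      next
        case False
        then show ?thesis using y unfolding Yb(1) D_def by blast
      qed
    qed
  qed
  then have "openin Y (topspace Y - D)" using openin_Un[OF U(1) o2] by simp
  then have clD: "closedin Y D" unfolding closedin_def using DX Yb(1) by blast
  have "D = {} \<or> D = topspace Y" using Yb(3) oD clD unfolding connected_space_clopen_in by blast
  moreover have "D \<noteq> {}" unfolding D_def using nonempty_connected_components_of[OF C] by blast
  moreover have "None \<notin> D" unfolding D_def by blast
  ultimately show False using Yb(1) by blast
qed

lemma ZY_good: "good ZY" and ZY_Zsets: "ZY \<in> Zsets X B"
proof -
  obtain x where "x \<in> topspace X" using ne by blast
  then obtain C where C: "C \<in> connected_components_of X"
    using Union_connected_components_of[of X] by (metis UnionE)
  have "ZY \<noteq> {}" using ZY_comp[OF C] by blast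
  moreover have "ZY \<subseteq> topspace B - topspace X" using ZY_B ZY_X by blast
  moreover have "compactin B ZY" using closedin_compact_space[OF scB(1) ZY_closed] .
  ultimately show "good ZY" unfolding good_def by blast
  show "ZY \<in> Zsets X B" unfolding Zsets_def
    using \<open>ZY \<subseteq> topspace B - topspace X\<close> \<open>compactin B ZY\<close> ZY_comp by blast
qed

lemma Some_XU: "N \<subseteq> insert None (Some ` topspace X) \<Longrightarrow> None \<notin> N \<Longrightarrow> N = Some ` XU N"
  unfolding XU_def by auto

lemma zeta_ZY: "zeta X B ZY = Y"
  unfolding topology_eq
proof
  fix N
  note oz = openin_zeta'[OF ZY_good]
  show "openin (zeta X B ZY) N \<longleftrightarrow> openin Y N"
  proof (cases "None \<in> N")
    case False
    show ?thesis
    proof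
      assume "openin (zeta X B ZY) N"
      then obtain V where V: "N \<subseteq> insert None (Some ` topspace X)" "openin B V"
        "XU N = V \<inter> topspace X" unfolding oz XU_def by blast
      have NS: "N \<subseteq> Some ` topspace X" using V(1) False by blast
      show "openin Y N" using Y1[OF NS] V by blast
    next
      assume oN: "openin Y N"
      have NT: "N \<subseteq> insert None (Some ` topspace X)" using openin_subset[OF oN] Yb(1) by simp
      have NS: "N \<subseteq> Some ` topspace X" using NT False by blast
      obtain V where V: "openin B V" "XU N = V \<inter> topspace X" using Y1[OF NS] oN by blast
      have "openin B (V - ZY)" using openin_diff[OF V(1) ZY_closed] .
      moreover have "(V - ZY) \<inter> ZY = {}" by blast
      moreover have "XU N = (V - ZY) \<inter> topspace X" using V(2) ZY_X by blast
      ultimately show "openin (zeta X B ZY) N" unfolding oz XU_def using NT False by blast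
    qed
  next
    case True
    show ?thesis
    proof
      assume "openin (zeta X B ZY) N"
      then obtain V where V: "N \<subseteq> insert None (Some ` topspace X)" "openin B V" "ZY \<subseteq> V"
        "XU N = V \<inter> topspace X" unfolding oz XU_def using True by blast
      have K: "closedin B (topspace B - V)" using closedin_diff[OF closedin_topspace V(2)] .
      have "(topspace B - V) \<inter> ZY = {}" using V(3) by blast
      then obtain U where U: "openin Y U" "None \<in> U" "B closure_of XU U \<inter> (topspace B - V) = {}"
        using key[OF K] by blast
      have "XU U \<subseteq> B closure_of XU U" using XU_B by (rule closure_of_subset)
      then have "XU U \<subseteq> V" using U(3) XU_B by blast
      then have XUU: "XU U \<subseteq> XU N" using V(4) XU_sub by blast
      have UT: "U \<subseteq> insert None (Some ` topspace X)" using openin_subset[OF U(1)] Yb(1) by simp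
      have UN: "U \<subseteq> N"
      proof
        fix y assume y: "y \<in> U"
        show "y \<in> N"
        proof (cases y)
          case None then show ?thesis using True by simp
        next
          case (Some x)
          then have "x \<in> XU U" using y UT unfolding XU_def by blast
          then show ?thesis using XUU Some unfolding XU_def by blast
        qed
      qed
      have s: "Some ` XU N \<subseteq> Some ` topspace X" using XU_sub by blast
      have "XU (Some ` XU N) = XU N" unfolding XU_def by blast
      then have "XU (Some ` XU N) = V \<inter> topspace X" using V(4) by simp
      then have o2: "openin Y (Some ` XU N)" by (subst Y1[OF s]) (use V(2) in blast)
      have "N = U \<union> Some ` XU N"
      proof
        show "N \<subseteq> U \<union> Some ` XU N"
        proof
          fix y assume y: "y \<in> N"
          show "y \<in> U \<union> Some ` XU N"
          proof (cases y)
            case None then show ?thesis using U(2) by simp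
          next
            case (Some x)
            then have "x \<in> topspace X" using y V(1) by blast
            then have "x \<in> XU N" using y Some unfolding XU_def by simp
            then show ?thesis using Some by blast
          qed
        qed
      next
        have "Some ` XU N \<subseteq> N" unfolding XU_def by auto
        then show "U \<union> Some ` XU N \<subseteq> N" using UN by (rule Un_least[rotated])
      qed
      then show "openin Y N" using openin_Un[OF U(1) o2] by simp
    next
      assume oN: "openin Y N"
      have NT: "N \<subseteq> insert None (Some ` topspace X)" using openin_subset[OF oN] Yb(1) by simp
      obtain W0 where W0: "openin B W0" "XU N = W0 \<inter> topspace X" using Yopen_XU[OF oN] by blast
      have cl: "closedin Y (topspace Y - N)" using closedin_diff[OF closedin_topspace oN] .
      have nT: "None \<in> topspace Y - (topspace Y - N)" using True Yb(1) by simp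
      obtain g where g: "continuous_map Y (top_of_set {0..1::real}) g" "g None = 0"
        "g ` (topspace Y - N) \<subseteq> {1}"
        using Ysep(1)[unfolded completely_regular_space_def, rule_format, OF conjI[OF cl nT]] by blast
      have gE: "continuous_map Y euclideanreal g" using g(1) continuous_map_in_subtopology by blast
      have "continuous_map X (top_of_set {0..1}) (g \<circ> Some)"
        using continuous_map_compose[OF contSome g(1)] .
      then obtain G where G: "continuous_map B (top_of_set {0..1::real}) G"
          "\<forall>x\<in>topspace X. G x = (g \<circ> Some) x"
        using scE[OF \<open>continuous_map X (top_of_set {0..1}) (g \<circ> Some)\<close>] by blast
      have GE: "continuous_map B euclideanreal G" using G(1) continuous_map_in_subtopology by blast
      define V0 where "V0 = {b \<in> topspace B. G b \<in> {..<1/2}}"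
      have oV0: "openin B V0" unfolding V0_def
        by (rule openin_continuous_map_preimage[OF GE]) simp
      have ZV0: "ZY \<subseteq> V0"
      proof
        fix b assume b: "b \<in> ZY"
        have bB: "b \<in> topspace B" using b ZY_B by blast
        show "b \<in> V0"
        proof (rule ccontr)
          assume "b \<notin> V0"
          then have Gb: "G b \<ge> 1/2" unfolding V0_def using bB by auto
          define U where "U = {y \<in> topspace Y. g y \<in> {..<1/4}}"
          have oU: "openin Y U" unfolding U_def
            by (rule openin_continuous_map_preimage[OF gE]) simp
          have "None \<in> U" unfolding U_def using g(2) Yb(1) by simp
          then have cl: "b \<in> B closure_of XU U" using b oU unfolding ZY_def by blast
          define W where "W = {c \<in> topspace B. G c \<in> {1/4<..}}"
          have oW: "openin B W" unfolding W_def
            by (rule openin_continuous_map_preimage[OF GE]) simp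
          have bW: "b \<in> W" unfolding W_def using bB Gb by simp
          have "\<forall>T. b \<in> T \<and> openin B T \<longrightarrow> (\<exists>y. y \<in> XU U \<and> y \<in> T)"
            using cl unfolding in_closure_of by (elim conjE)
          then obtain y where y: "y \<in> XU U" "y \<in> W" using oW bW by blast
          then have yX: "y \<in> topspace X" "g (Some y) < 1/4" unfolding XU_def U_def by auto
          moreover have "G y > 1/4" using y(2) unfolding W_def by simp
          ultimately show False using G(2) by simp
        qed
      qed
      have V0N: "V0 \<inter> topspace X \<subseteq> XU N"
      proof
        fix x assume x: "x \<in> V0 \<inter> topspace X"
        have "G x < 1/2" using x unfolding V0_def by simp
        moreover have "G x = g (Some x)" using G(2) x by simp
        ultimately have "g (Some x) < 1/2" by simp
        moreover have "Some x \<in> topspace Y" using x Yb(1) by simp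
        ultimately have "Some x \<in> N"
        proof (rule_tac ccontr)
          assume "g (Some x) < 1/2" "Some x \<in> topspace Y" "Some x \<notin> N"
          then have "g (Some x) \<in> {1}" using g(3) by blast
          then show False using \<open>g (Some x) < 1/2\<close> by simp
        qed
        then show "x \<in> XU N" using x unfolding XU_def by blast
      qed
      have "openin B (V0 \<union> W0)" using oV0 W0(1) by (rule openin_Un)
      moreover have "ZY \<subseteq> V0 \<union> W0" using ZV0 by blast
      moreover have "XU N = (V0 \<union> W0) \<inter> topspace X" using V0N W0(2) by blast
      then have "{x \<in> topspace X. Some x \<in> N} = (V0 \<union> W0) \<inter> topspace X" unfolding XU_def .
      ultimately show "openin (zeta X B ZY) N" unfolding oz using NT True by blast
    qed
  qed
qed

end


end

theorem lemma3p1: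
  fixes X B :: "'a topology" and i :: sep_axiom
  assumes "topspace X \<noteq> {}"
    and "locally_connected_space X" and "Ti_space i X"
    and "stone_cech X B"
  shows "(\<forall>Z\<in>Zsets X B. zeta X B Z \<in> one_point_connectifications i X)
       \<and> bij_betw (zeta X B) (Zsets X B) (one_point_connectifications i X)
       \<and> (\<forall>Z1\<in>Zsets X B. \<forall>Z2\<in>Zsets X B. Z1 \<subseteq> Z2 \<longrightarrow> opc_le X (zeta X B Z2) (zeta X B Z1))
       \<and> (\<forall>Z1\<in>Zsets X B. \<forall>Z2\<in>Zsets X B. opc_le X (zeta X B Z2) (zeta X B Z1) \<longrightarrow> Z1 \<subseteq> Z2)"
proof -
  note sc = assms(4) and ne = assms(1) and lc = assms(2) and Ti = assms(3)
  have P1: "\<forall>Z\<in>Zsets X B. zeta X B Z \<in> one_point_connectifications i X"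
    using zeta_in_opc[OF sc ne Ti] by blast
  have P3: "\<forall>Z1\<in>Zsets X B. \<forall>Z2\<in>Zsets X B. Z1 \<subseteq> Z2 \<longrightarrow> opc_le X (zeta X B Z2) (zeta X B Z1)"
  proof (intro ballI impI)
    fix Z1 Z2 assume "Z1 \<in> Zsets X B" "Z2 \<in> Zsets X B" "Z1 \<subseteq> Z2"
    then show "opc_le X (zeta X B Z2) (zeta X B Z1)"
      using zeta_le[OF sc Zsets_good[OF sc ne] Zsets_good[OF sc ne]] by blast
  qed
  have P4: "\<forall>Z1\<in>Zsets X B. \<forall>Z2\<in>Zsets X B. opc_le X (zeta X B Z2) (zeta X B Z1) \<longrightarrow> Z1 \<subseteq> Z2"
  proof (intro ballI impI)
    fix Z1 Z2 assume Z: "Z1 \<in> Zsets X B" "Z2 \<in> Zsets X B" "opc_le X (zeta X B Z2) (zeta X B Z1)"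
    then obtain f where f: "continuous_map (zeta X B Z1) (zeta X B Z2) f"
      "\<forall>x\<in>topspace X. f (Some x) = Some x" unfolding opc_le_def by blast
    show "Z1 \<subseteq> Z2"
      by (rule zeta_anti[OF sc Zsets_good[OF sc ne Z(1)] Zsets_good[OF sc ne Z(2)] f(1) f(2)])
  qed
  have inj: "inj_on (zeta X B) (Zsets X B)"
  proof (rule inj_onI)
    fix Z1 Z2 assume Z: "Z1 \<in> Zsets X B" "Z2 \<in> Zsets X B" "zeta X B Z1 = zeta X B Z2"
    have "opc_le X (zeta X B Z2) (zeta X B Z1)" "opc_le X (zeta X B Z1) (zeta X B Z2)"
      unfolding opc_le_def Z(3) by (intro exI[of _ id] conjI continuous_map_id; simp)+
    then show "Z1 = Z2" using P4 Z(1,2) by blast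
  qed
  have surj: "one_point_connectifications i X \<subseteq> zeta X B ` Zsets X B"
  proof
    fix Y assume Y: "Y \<in> one_point_connectifications i X"
    have "ZY X B Y \<in> Zsets X B" by (rule ZY_Zsets[OF sc ne lc Y])
    moreover have "zeta X B (ZY X B Y) = Y" by (rule zeta_ZY[OF sc ne lc Y])
    ultimately show "Y \<in> zeta X B ` Zsets X B" by (metis imageI)
  qed
  have "bij_betw (zeta X B) (Zsets X B) (one_point_connectifications i X)"
    unfolding bij_betw_def using inj P1 surj by blast
  then show ?thesis using P1 P3 P4 by blast
qed

end
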